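(* For all integers $n\ge k\ge 2$ and $r\ge 0$, \[ \mathsf{opt}_{\operatorname{bandit}}^{\operatorname{adap}}(n,k,r)\le k\log_k n + 2kr. \]
   Context: Prediction with expert advice: $\mathcal{Y}=\{1,\dots,k\}$, $\mathcal{X}=[k]^n$, experts $h_i(x)=x_i$, $i=1,\dots,n$. $\mathcal{P}_r$ is the set of finite sequences of examples in $\mathcal{X}\times\mathcal{Y}$ on which some $h_i$ errs on at most $r$ examples. Online learning with bandit feedback: each round the adversary presents $x_t$, the learner chooses a distribution $\pi^{(t)}$ on $\mathcal{Y}$ (depending on past observations and $x_t$) and draws $\hat y_t\sim\pi^{(t)}$, and observes only whether $\hat y_t=y_t$; a mistake is $\hat y_t\ne y_t$. An adaptive adversary chooses $x_t$ from the history, sees $\pi^{(t)}$, and chooses a distribution $\tau^{(t)}$ from which $y_t$ is drawn; it must ensure that whenever the history is realizable, each $y_t$ in the support of $\tau^{(t)}$ keeps it realizable, where a history of (instance, correct/incorrect, prediction) triples is realizable if some choice of true labels agreeing with the observations gives a sequence in $\mathcal{P}_r$. $\mathsf{opt}_{\operatorname{bandit}}^{\operatorname{adap}}(n,k,r)=\inf_{\text{learner}}\sup_{\text{adversary}}$ expected number of mistakes. *)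

theory Defs
  imports "HOL-Probability.Probability_Mass_Function" "HOL-Library.Extended_Real"
begin

text \<open>Labels: Y = {1..k}.  Instances: X = [k]^n, as lists of length n with entries in {1..k}.
  Expert i (for i < n) predicts x ! i.\<close>

definition labels :: "nat \<Rightarrow> nat set" where
  "labels k = {1..k}"

definition instances :: "nat \<Rightarrow> nat \<Rightarrow> nat list set" where
  "instances n k = {x. length x = n \<and> set x \<subseteq> labels k}"

definition P_r :: "nat \<Rightarrow> nat \<Rightarrow> nat \<Rightarrow> (nat list \<times> nat) list set" where
  "P_r n k r = {S. (\<forall>(x,y)\<in>set S. x \<in> instances n k \<and> y \<in> labels k) \<and>
      (\<exists>i<n. length (filter (\<lambda>(x,y). x ! i \<noteq> y) S) \<le> r)}"

text \<open>Observed history: triples (instance, correct?, prediction).\<close>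
type_synonym obs = "nat list \<times> bool \<times> nat"

definition realizable :: "nat \<Rightarrow> nat \<Rightarrow> nat \<Rightarrow> obs list \<Rightarrow> bool" where
  "realizable n k r H \<longleftrightarrow> (\<exists>ys :: nat list. length ys = length H \<and>
      (\<forall>j<length H. fst (snd (H ! j)) = (snd (snd (H ! j)) = ys ! j)) \<and>
      zip (map fst H) ys \<in> P_r n k r)"

text \<open>Full history of a round: (x_t, \<pi>^(t), predicted label, true label).\<close>
type_synonym fullrec = "nat list \<times> nat pmf \<times> nat \<times> nat"

definition obs_of :: "fullrec list \<Rightarrow> obs list" where
  "obs_of fh = map (\<lambda>(x,p,yh,y). (x, yh = y, yh)) fh"

type_synonym learner = "obs list \<Rightarrow> nat list \<Rightarrow> nat pmf"
type_synonym adv_x = "fullrec list \<Rightarrow> nat list"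
type_synonym adv_y = "fullrec list \<Rightarrow> nat list \<Rightarrow> nat pmf \<Rightarrow> nat pmf"

definition valid_learner :: "nat \<Rightarrow> learner \<Rightarrow> bool" where
  "valid_learner k L \<longleftrightarrow> (\<forall>H x. set_pmf (L H x) \<subseteq> labels k)"

text \<open>Adaptive adversary: chooses x_t from the full history, sees \<pi>^(t), chooses \<tau>^(t);
  realizability of the observed history must be preserved for every label in the support
  of \<tau>^(t) (whatever prediction in the support of \<pi>^(t) is drawn).\<close>
definition valid_adversary :: "nat \<Rightarrow> nat \<Rightarrow> nat \<Rightarrow> adv_x \<Rightarrow> adv_y \<Rightarrow> bool" where
  "valid_adversary n k r AX AY \<longleftrightarrow>
     (\<forall>fh. AX fh \<in> instances n k) \<and>
     (\<forall>fh x p. set_pmf (AY fh x p) \<subseteq> labels k) \<and>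
     (\<forall>fh p. realizable n k r (obs_of fh) \<longrightarrow>
        (\<forall>y\<in>set_pmf (AY fh (AX fh) p). \<forall>yh\<in>set_pmf p.
           realizable n k r (obs_of fh @ [(AX fh, yh = y, yh)])))"

fun exp_mistakes :: "learner \<Rightarrow> adv_x \<Rightarrow> adv_y \<Rightarrow> nat \<Rightarrow> fullrec list \<Rightarrow> real" where
  "exp_mistakes L AX AY 0 fh = 0"
| "exp_mistakes L AX AY (Suc T) fh =
     (let x = AX fh; p = L (obs_of fh) x; q = AY fh x p in
      measure_pmf.expectation (pair_pmf p q)
        (\<lambda>(yh, y). (if yh \<noteq> y then 1 else 0) + exp_mistakes L AX AY T (fh @ [(x, p, yh, y)])))"

definition opt_bandit_adap :: "nat \<Rightarrow> nat \<Rightarrow> nat \<Rightarrow> ereal" where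
  "opt_bandit_adap n k r =
     (INF L \<in> {L. valid_learner k L}.
        SUP (AX, AY, T) \<in> {(AX, AY, T). valid_adversary n k r AX AY}.
          ereal (exp_mistakes L AX AY T []))"

end

theory Submission
  imports Defs
begin

definition cc :: "nat \<Rightarrow> real" where "cc k = real k / ln (real k)"
definition bt :: "nat \<Rightarrow> real" where "bt k = 1 / (real k)^2"
definition Abar :: "nat \<Rightarrow> real \<Rightarrow> real" where "Abar k q = 1 + cc k * (bt k - q)"
definition Dv :: "nat \<Rightarrow> real \<Rightarrow> real" where
  "Dv k q = Abar k q + cc k * (ln (real k) + 1 - real k * q)"

definition wts_of :: "nat \<Rightarrow> (nat \<Rightarrow> real) \<Rightarrow> nat \<Rightarrow> real" where
  "wts_of k Q j = (if \<exists>j'\<in>{1..k}. Dv k (Q j') \<le> 0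
      then (if j = (LEAST j'. j' \<in> {1..k} \<and> Dv k (Q j') \<le> 0) then 1 else 0)
      else 1 / Dv k (Q j))"

lemma Dv_Abar:
  assumes "2 \<le> k"
  shows "(real k + 1) * Abar k q - Dv k q = (1 - real k) / ln (real k)"
proof -
  have L: "ln (real k) > 0" using assms by simp
  have k0: "real k > 0" using assms by simp
  show ?thesis unfolding Dv_def Abar_def cc_def bt_def using L k0
    by (simp add: field_simps power2_eq_square)
qed

lemma wts_nonneg:
  assumes "2 \<le> k" "j \<in> {1..k}"
  shows "0 \<le> wts_of k Q j"
  using assms by (auto simp: wts_of_def not_le intro: less_imp_le)

lemma wts_sum_pos:
  assumes "2 \<le> k"
  shows "0 < (\<Sum>j\<in>{1..k}. wts_of k Q j)"
proof (cases "\<exists>j'\<in>{1..k}. Dv k (Q j') \<le> 0")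
  case True
  define y0 where "y0 = (LEAST j'. j' \<in> {1..k} \<and> Dv k (Q j') \<le> 0)"
  have y0: "y0 \<in> {1..k}" using True unfolding y0_def by (metis (mono_tags, lifting) LeastI)
  have "(\<Sum>j\<in>{1..k}. wts_of k Q j) = (\<Sum>j\<in>{1..k}. if j = y0 then 1 else 0)"
    using True by (simp add: wts_of_def y0_def)
  also have "\<dots> = 1" using y0 by simp
  finally show ?thesis by simp
next
  case False
  have "0 < (\<Sum>j\<in>{1..k}. 1 / Dv k (Q j))"
    using False assms by (intro sum_pos) (auto simp: not_le)
  then show ?thesis using False by (simp add: wts_of_def)
qed

lemma key_ineq:
  fixes Q :: "nat \<Rightarrow> real"
  assumes k2: "2 \<le> k" and Qb: "\<forall>j\<in>{1..k}. 0 < Q j \<and> Q j \<le> 1" and y: "y \<in> {1..k}"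
  shows "(\<Sum>a\<in>{1..k}. wts_of k Q a * ((if a = y then 0 else 1) +
            cc k * (if a = y then ln (Q a) else ln (1 + bt k - Q a)))) \<le> 0"
proof -
  define F where "F a = (if a = y then 0 else 1) +
            cc k * (if a = y then ln (Q a) else ln (1 + bt k - Q a))" for a
  have L: "ln (real k) > 0" using k2 by simp
  have k0: "real k > 0" using k2 by simp
  have c0: "cc k > 0" unfolding cc_def using L k0 by simp
  have bt0: "bt k > 0" unfolding bt_def using k0 by simp
  have neg: "(1 - real k) / ln (real k) \<le> 0" using L k2 by (intro divide_nonpos_pos) auto
  have Fa: "F a \<le> Abar k (Q a)" if "a \<in> {1..k}" "a \<noteq> y" for a
  proof -
    have "Q a \<le> 1" using Qb that by auto
    then have "ln (1 + bt k - Q a) \<le> (1 + bt k - Q a) - 1"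
      using bt0 by (intro ln_le_minus_one) auto
    then show ?thesis unfolding F_def Abar_def using that c0
      by (simp add: mult_left_mono)
  qed
  have Fy: "F y \<le> Abar k (Q y) - Dv k (Q y)"
  proof -
    have "ln (real k * Q y) \<le> real k * Q y - 1"
      using Qb y k0 by (intro ln_le_minus_one) auto
    moreover have "ln (real k * Q y) = ln (real k) + ln (Q y)"
      using Qb y k0 by (simp add: ln_mult_pos)
    ultimately have "ln (Q y) \<le> - (ln (real k) + 1 - real k * Q y)" by simp
    then have "cc k * ln (Q y) \<le> cc k * (- (ln (real k) + 1 - real k * Q y))"
      using c0 by (intro mult_left_mono) auto
    then show ?thesis unfolding F_def Dv_def by (simp add: algebra_simps)
  qed
  show ?thesis
  proof (cases "\<exists>j'\<in>{1..k}. Dv k (Q j') \<le> 0")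
    case True
    define y0 where "y0 = (LEAST j'. j' \<in> {1..k} \<and> Dv k (Q j') \<le> 0)"
    have y0: "y0 \<in> {1..k} \<and> Dv k (Q y0) \<le> 0"
      using True unfolding y0_def by (metis (mono_tags, lifting) LeastI)
    have "(\<Sum>a\<in>{1..k}. wts_of k Q a * F a) = (\<Sum>a\<in>{1..k}. if a = y0 then F a else 0)"
      using True by (intro sum.cong) (auto simp: wts_of_def y0_def)
    also have "\<dots> = F y0" using y0 by simp
    also have "\<dots> \<le> 0"
    proof (cases "y0 = y")
      case True
      have "ln (Q y) \<le> 0" using Qb y by simp
      then show ?thesis using True c0 unfolding F_def by (simp add: mult_nonneg_nonpos)
    next
      case False
      have "Abar k (Q y0) \<le> 0"
      proof -
        have "(real k + 1) * Abar k (Q y0) = Dv k (Q y0) + (1 - real k) / ln (real k)"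
          using Dv_Abar[OF k2] by (simp add: algebra_simps)
        also have "\<dots> \<le> 0" using y0 neg by linarith
        finally show ?thesis using k0
          by (simp add: mult_le_0_iff)
      qed
      then show ?thesis using Fa[of y0] y0 False by simp
    qed
    finally show ?thesis unfolding F_def .
  next
    case False
    then have Dp: "\<forall>a\<in>{1..k}. Dv k (Q a) > 0" by auto
    have w: "wts_of k Q a = 1 / Dv k (Q a)" for a using False by (simp add: wts_of_def)
    have "(\<Sum>a\<in>{1..k}. wts_of k Q a * F a)
        \<le> (\<Sum>a\<in>{1..k}. (Abar k (Q a) - (if a = y then Dv k (Q a) else 0)) / Dv k (Q a))"
    proof (intro sum_mono)
      fix a assume a: "a \<in> {1..k}"
      have "F a \<le> Abar k (Q a) - (if a = y then Dv k (Q a) else 0)"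
        using Fa[OF a] Fy by auto
      then show "wts_of k Q a * F a \<le> (Abar k (Q a) - (if a = y then Dv k (Q a) else 0)) / Dv k (Q a)"
      proof -
        have "F a / Dv k (Q a) \<le> (Abar k (Q a) - (if a = y then Dv k (Q a) else 0)) / Dv k (Q a)"
          using Dp a \<open>F a \<le> _\<close> by (intro divide_right_mono) (auto intro: less_imp_le)
        then show ?thesis unfolding w by simp
      qed
    qed
    also have "\<dots> = (\<Sum>a\<in>{1..k}. Abar k (Q a) / Dv k (Q a)) - (\<Sum>a\<in>{1..k}. if a = y then 1 else 0)"
      unfolding sum_subtractf[symmetric] using Dp y
      by (intro sum.cong) (auto simp: diff_divide_distrib dest: bspec[of _ _ y])
    also have "\<dots> = (\<Sum>a\<in>{1..k}. Abar k (Q a) / Dv k (Q a)) - 1" using y by simp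
    also have "\<dots> \<le> (\<Sum>a\<in>{1..k}. 1 / (real k + 1)) - 1"
    proof -
      have "Abar k (Q a) / Dv k (Q a) \<le> 1 / (real k + 1)" if a: "a \<in> {1..k}" for a
      proof -
        have "(real k + 1) * Abar k (Q a) \<le> Dv k (Q a)"
          using Dv_Abar[OF k2, of "Q a"] neg by linarith
        then show ?thesis using Dp a k0 by (simp add: field_simps)
      qed
      then show ?thesis by (intro diff_right_mono sum_mono) auto
    qed
    also have "\<dots> \<le> 0" using k0 by (simp add: field_simps)
    finally show ?thesis unfolding F_def .
  qed
qed


definition mkpmf :: "nat \<Rightarrow> (nat \<Rightarrow> real) \<Rightarrow> nat pmf" where
  "mkpmf k w = embed_pmf (\<lambda>j. if j \<in> {1..k} then w j / (\<Sum>i\<in>{1..k}. w i) else 0)"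

lemma pmf_mkpmf:
  assumes "\<forall>j\<in>{1..k}. 0 \<le> w j" "0 < (\<Sum>i\<in>{1..k}. w i)"
  shows "pmf (mkpmf k w) j = (if j \<in> {1..k} then w j / (\<Sum>i\<in>{1..k}. w i) else 0)"
proof -
  define f where "f j = (if j \<in> {1..k} then w j / (\<Sum>i\<in>{1..k}. w i) else 0)" for j
  have nn: "\<And>x. 0 \<le> f x" using assms unfolding f_def by auto
  have "(\<integral>\<^sup>+x. ennreal (f x) \<partial>count_space UNIV) = (\<integral>\<^sup>+x. ennreal (f x) * indicator {1..k} x \<partial>count_space UNIV)"
    by (intro nn_integral_cong) (auto simp: f_def)
  also have "\<dots> = (\<integral>\<^sup>+x. ennreal (f x) \<partial>count_space {1..k})"
    by (simp add: nn_integral_count_space_indicator)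
  also have "\<dots> = (\<Sum>x\<in>{1..k}. ennreal (f x))"
    by (simp add: nn_integral_count_space_finite)
  also have "\<dots> = ennreal (\<Sum>x\<in>{1..k}. f x)"
    using nn by (simp add: sum_ennreal)
  also have "(\<Sum>x\<in>{1..k}. f x) = (\<Sum>x\<in>{1..k}. w x / (\<Sum>i\<in>{1..k}. w i))"
    unfolding f_def by (intro sum.cong) auto
  also have "\<dots> = 1" using assms by (simp add: sum_divide_distrib[symmetric])
  finally have "(\<integral>\<^sup>+x. ennreal (f x) \<partial>count_space UNIV) = 1" by simp
  then show ?thesis unfolding mkpmf_def f_def[symmetric]
    using pmf_embed_pmf[of f, OF nn] by simp
qed

lemma set_mkpmf:
  assumes "\<forall>j\<in>{1..k}. 0 \<le> w j" "0 < (\<Sum>i\<in>{1..k}. w i)"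
  shows "set_pmf (mkpmf k w) \<subseteq> {1..k}"
  using pmf_mkpmf[OF assms] by (auto simp: set_pmf_eq)

definition errs :: "obs list \<Rightarrow> nat \<Rightarrow> nat" where
  "errs H i = length (filter (\<lambda>(x,b,yh). (b \<and> x!i \<noteq> yh) \<or> (\<not> b \<and> x!i = yh)) H)"

definition Wsum :: "nat \<Rightarrow> nat \<Rightarrow> obs list \<Rightarrow> real" where
  "Wsum n k H = (\<Sum>i<n. bt k ^ errs H i)"

definition Qf :: "nat \<Rightarrow> nat \<Rightarrow> obs list \<Rightarrow> nat list \<Rightarrow> nat \<Rightarrow> real" where
  "Qf n k H x j = (\<Sum>i<n. bt k ^ errs H i * (if x!i = j then 1 else bt k)) / Wsum n k H"

definition lrn :: "nat \<Rightarrow> nat \<Rightarrow> learner" where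
  "lrn n k H x = mkpmf k (wts_of k (Qf n k H x))"

definition Phi :: "nat \<Rightarrow> nat \<Rightarrow> nat \<Rightarrow> obs list \<Rightarrow> real" where
  "Phi n k r H = cc k * ln (Wsum n k H) + 2 * real k * real r"

lemma errs_snoc:
  "errs (H @ [(x,b,yh)]) i = errs H i + (if (b \<and> x!i \<noteq> yh) \<or> (\<not> b \<and> x!i = yh) then 1 else 0)"
  by (simp add: errs_def)

lemma bt_pos: "2 \<le> k \<Longrightarrow> 0 < bt k" by (simp add: bt_def)
lemma bt_le1: "2 \<le> k \<Longrightarrow> bt k \<le> 1" by (simp add: bt_def)

lemma Wsum_pos: "2 \<le> k \<Longrightarrow> 0 < n \<Longrightarrow> 0 < Wsum n k H"
  unfolding Wsum_def by (intro sum_pos) (auto simp: bt_pos)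

lemma Qf_bounds:
  assumes "2 \<le> k" "0 < n"
  shows "0 < Qf n k H x j \<and> Qf n k H x j \<le> 1"
proof -
  have W: "0 < Wsum n k H" using Wsum_pos assms by blast
  have p: "0 < (\<Sum>i<n. bt k ^ errs H i * (if x!i = j then 1 else bt k))"
    using assms by (intro sum_pos) (auto simp: bt_pos)
  have "(\<Sum>i<n. bt k ^ errs H i * (if x!i = j then 1 else bt k)) \<le> (\<Sum>i<n. bt k ^ errs H i)"
    using assms by (intro sum_mono) (auto simp: bt_pos bt_le1 less_imp_le)
  then show ?thesis using W p unfolding Qf_def Wsum_def by (simp add: field_simps)
qed

lemma Wsum_true:
  assumes "2 \<le> k" "0 < n"
  shows "Wsum n k (H @ [(x, True, a)]) = Wsum n k H * Qf n k H x a"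
proof -
  have W: "0 < Wsum n k H" using Wsum_pos assms by blast
  have "Wsum n k (H @ [(x, True, a)]) = (\<Sum>i<n. bt k ^ errs H i * (if x!i = a then 1 else bt k))"
    unfolding Wsum_def errs_snoc by (intro sum.cong) auto
  then show ?thesis using W unfolding Qf_def by simp
qed

lemma Wsum_false:
  assumes "2 \<le> k" "0 < n"
  shows "Wsum n k (H @ [(x, False, a)]) = Wsum n k H * (1 + bt k - Qf n k H x a)"
proof -
  have W: "0 < Wsum n k H" using Wsum_pos assms by blast
  have "Wsum n k (H @ [(x, False, a)]) = (\<Sum>i<n. bt k ^ errs H i * (1 + bt k - (if x!i = a then 1 else bt k)))"
    unfolding Wsum_def errs_snoc by (intro sum.cong) auto
  also have "\<dots> = (1 + bt k) * Wsum n k H - (\<Sum>i<n. bt k ^ errs H i * (if x!i = a then 1 else bt k))"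
    unfolding Wsum_def by (simp add: algebra_simps sum_subtractf sum_distrib_left)
  also have "\<dots> = Wsum n k H * (1 + bt k - Qf n k H x a)"
    using W unfolding Qf_def by (simp add: algebra_simps)
  finally show ?thesis .
qed

lemma realizable_errs:
  assumes "realizable n k r H"
  shows "\<exists>i<n. errs H i \<le> r"
proof -
  obtain ys where ys: "length ys = length H"
    "\<forall>j<length H. fst (snd (H ! j)) = (snd (snd (H ! j)) = ys ! j)"
    "zip (map fst H) ys \<in> P_r n k r"
    using assms unfolding realizable_def by blast
  then obtain i where i: "i < n" "length (filter (\<lambda>(x,y). x ! i \<noteq> y) (zip (map fst H) ys)) \<le> r"
    unfolding P_r_def by blast
  have "errs H i = card {j. j < length H \<and> (\<lambda>(x,b,yh). (b \<and> x!i \<noteq> yh) \<or> (\<not> b \<and> x!i = yh)) (H ! j)}"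
    unfolding errs_def length_filter_conv_card ..
  also have "\<dots> \<le> card {j. j < length (zip (map fst H) ys) \<and> (\<lambda>(x,y). x ! i \<noteq> y) (zip (map fst H) ys ! j)}"
  proof (intro card_mono)
    show "finite {j. j < length (zip (map fst H) ys) \<and> (\<lambda>(x,y). x ! i \<noteq> y) (zip (map fst H) ys ! j)}"
      by simp
  next
    show "{j. j < length H \<and> (\<lambda>(x,b,yh). (b \<and> x!i \<noteq> yh) \<or> (\<not> b \<and> x!i = yh)) (H ! j)}
        \<subseteq> {j. j < length (zip (map fst H) ys) \<and> (\<lambda>(x,y). x ! i \<noteq> y) (zip (map fst H) ys ! j)}"
    proof
      fix j assume "j \<in> {j. j < length H \<and> (\<lambda>(x,b,yh). (b \<and> x!i \<noteq> yh) \<or> (\<not> b \<and> x!i = yh)) (H ! j)}"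
      then have j: "j < length H" "(\<lambda>(x,b,yh). (b \<and> x!i \<noteq> yh) \<or> (\<not> b \<and> x!i = yh)) (H ! j)" by auto
      obtain x b yh where Hj: "H ! j = (x, b, yh)" by (metis prod_cases3)
      have "b = (yh = ys ! j)" using ys(2) j(1) Hj by force
      then show "j \<in> {j. j < length (zip (map fst H) ys) \<and> (\<lambda>(x,y). x ! i \<noteq> y) (zip (map fst H) ys ! j)}"
        using j Hj ys(1) by auto
    qed
  qed
  also have "\<dots> = length (filter (\<lambda>(x,y). x ! i \<noteq> y) (zip (map fst H) ys))"
    unfolding length_filter_conv_card ..
  finally show ?thesis using i by auto
qed

lemma Phi_nonneg:
  assumes "2 \<le> k" "realizable n k r H"
  shows "0 \<le> Phi n k r H"
proof -
  obtain i where i: "i < n" "errs H i \<le> r" using realizable_errs[OF assms(2)] by blast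
  have L: "ln (real k) > 0" using assms by simp
  have "bt k ^ r \<le> bt k ^ errs H i" using i assms by (intro power_decreasing) (auto simp: bt_pos bt_le1 less_imp_le)
  also have "\<dots> \<le> Wsum n k H" unfolding Wsum_def using i
    by (intro member_le_sum) (auto simp: bt_pos assms less_imp_le)
  finally have W: "bt k ^ r \<le> Wsum n k H" .
  have "0 < Wsum n k H" using Wsum_pos[OF assms(1), of n] i by simp
  then have "ln (bt k ^ r) \<le> ln (Wsum n k H)" using W assms by (subst ln_le_cancel_iff) (auto simp: bt_pos)
  moreover have "ln (bt k ^ r) = - 2 * real r * ln (real k)"
    using assms by (simp add: bt_def ln_realpow ln_div)
  ultimately have "- 2 * real r * ln (real k) \<le> ln (Wsum n k H)" by simp
  then have "cc k * (- 2 * real r * ln (real k)) \<le> cc k * ln (Wsum n k H)"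
    using L assms by (intro mult_left_mono) (auto simp: cc_def)
  moreover have "cc k * (- 2 * real r * ln (real k)) = - 2 * real k * real r"
    using L unfolding cc_def by (simp add: field_simps)
  ultimately show ?thesis unfolding Phi_def by linarith
qed


lemma lrn_facts:
  assumes "2 \<le> k"
  shows "pmf (lrn n k H x) a = (if a \<in> {1..k} then wts_of k (Qf n k H x) a / (\<Sum>i\<in>{1..k}. wts_of k (Qf n k H x) i) else 0)"
    and "set_pmf (lrn n k H x) \<subseteq> {1..k}"
proof -
  have h1: "\<forall>j\<in>{1..k}. 0 \<le> wts_of k (Qf n k H x) j" using wts_nonneg[OF assms] by blast
  have h2: "0 < (\<Sum>i\<in>{1..k}. wts_of k (Qf n k H x) i)" using wts_sum_pos[OF assms] .
  show "pmf (lrn n k H x) a = (if a \<in> {1..k} then wts_of k (Qf n k H x) a / (\<Sum>i\<in>{1..k}. wts_of k (Qf n k H x) i) else 0)"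
    unfolding lrn_def using pmf_mkpmf[OF h1 h2] .
  show "set_pmf (lrn n k H x) \<subseteq> {1..k}"
    unfolding lrn_def using set_mkpmf[OF h1 h2] .
qed

lemma obs_of_snoc: "obs_of (fh @ [(x, p, a, y)]) = obs_of fh @ [(x, a = y, a)]"
  by (simp add: obs_of_def)

lemma Phi_snoc:
  assumes "2 \<le> k" "0 < n"
  shows "Phi n k r (H @ [(x, a = y, a)]) = Phi n k r H +
     cc k * (if a = y then ln (Qf n k H x a) else ln (1 + bt k - Qf n k H x a))"
proof -
  have W: "0 < Wsum n k H" using Wsum_pos assms by blast
  have Q: "0 < Qf n k H x a" "Qf n k H x a \<le> 1" using Qf_bounds[OF assms] by auto
  have b: "0 < bt k" using bt_pos assms by blast
  show ?thesis
  proof (cases "a = y")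
    case True
    then show ?thesis using Wsum_true[OF assms, of H x a] W Q
      by (simp add: Phi_def ln_mult_pos algebra_simps)
  next
    case False
    have P: "0 < 1 + bt k - Qf n k H x a" using Q b by linarith
    have "ln (Wsum n k (H @ [(x, False, a)])) = ln (Wsum n k H) + ln (1 + bt k - Qf n k H x a)"
      unfolding Wsum_false[OF assms, of H x a] using W P by (simp add: ln_mult_pos)
    then show ?thesis using False by (simp add: Phi_def algebra_simps)
  qed
qed

lemma main_ind:
  assumes k2: "2 \<le> k" and n0: "0 < n" and adv: "valid_adversary n k r AX AY"
  shows "realizable n k r (obs_of fh) \<Longrightarrow> exp_mistakes (lrn n k) AX AY T fh \<le> Phi n k r (obs_of fh)"
proof (induction T arbitrary: fh)
  case 0
  then show ?case using Phi_nonneg[OF k2] by simp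
next
  case (Suc T)
  define x where "x = AX fh"
  define H where "H = obs_of fh"
  define p where "p = lrn n k H x"
  define q where "q = AY fh x p"
  define J where "J = {1..k}"
  define g where "g = (\<lambda>(yh, y). (if yh \<noteq> y then 1 else 0) + exp_mistakes (lrn n k) AX AY T (fh @ [(x, p, yh, y)]))"
  have e: "exp_mistakes (lrn n k) AX AY (Suc T) fh = measure_pmf.expectation (pair_pmf p q) g"
    by (simp add: x_def H_def p_def q_def g_def Let_def)
  have sp: "set_pmf p \<subseteq> J" unfolding p_def J_def using lrn_facts(2)[OF k2] .
  have sq: "set_pmf q \<subseteq> J" using adv unfolding q_def J_def valid_adversary_def labels_def by blast
  have fin: "finite J" by (simp add: J_def)
  have "measure_pmf.expectation (pair_pmf p q) g = (\<Sum>z\<in>J \<times> J. g z * pmf (pair_pmf p q) z)"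
    using sp sq fin by (intro integral_measure_pmf_real) auto
  also have "\<dots> = (\<Sum>a\<in>J. \<Sum>y\<in>J. g (a, y) * (pmf p a * pmf q y))"
    by (subst sum.cartesian_product) (auto intro!: sum.cong simp: pmf_pair)
  also have "\<dots> = (\<Sum>y\<in>J. \<Sum>a\<in>J. g (a, y) * (pmf p a * pmf q y))"
    by (rule sum.swap)
  also have "\<dots> \<le> (\<Sum>y\<in>J. pmf q y * Phi n k r H)"
  proof (intro sum_mono)
    fix y assume yJ: "y \<in> J"
    show "(\<Sum>a\<in>J. g (a, y) * (pmf p a * pmf q y)) \<le> pmf q y * Phi n k r H"
    proof (cases "pmf q y = 0")
      case True
      then show ?thesis by simp
    next
      case False
      then have yq: "y \<in> set_pmf q" by (simp add: set_pmf_eq)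
      define Q where "Q = Qf n k H x"
      define F where "F a = (if a = y then 0 else 1) +
            cc k * (if a = y then ln (Q a) else ln (1 + bt k - Q a))" for a
      define w where "w = wts_of k Q"
      define S where "S = (\<Sum>i\<in>J. w i)"
      have S0: "0 < S" unfolding S_def w_def J_def using wts_sum_pos[OF k2] .
      have pp: "pmf p a = w a / S" if "a \<in> J" for a
        using lrn_facts(1)[OF k2, of n H x a] that unfolding p_def w_def S_def Q_def J_def by simp
      have step: "g (a, y) * pmf p a \<le> pmf p a * (F a + Phi n k r H)" if aJ: "a \<in> J" for a
      proof (cases "pmf p a = 0")
        case True then show ?thesis by simp
      next
        case False
        then have ap: "a \<in> set_pmf p" by (simp add: set_pmf_eq)
        have real: "realizable n k r (obs_of fh @ [(x, a = y, a)])"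
          using adv Suc.prems yq ap unfolding valid_adversary_def x_def q_def p_def H_def by blast
        have "exp_mistakes (lrn n k) AX AY T (fh @ [(x, p, a, y)]) \<le> Phi n k r (obs_of fh @ [(x, a = y, a)])"
          using Suc.IH[of "fh @ [(x, p, a, y)]"] real by (simp add: obs_of_snoc)
        also have "\<dots> = Phi n k r H + cc k * (if a = y then ln (Q a) else ln (1 + bt k - Q a))"
          unfolding H_def Q_def using Phi_snoc[OF k2 n0] by blast
        finally have "g (a, y) \<le> F a + Phi n k r H" unfolding g_def F_def by auto
        then show ?thesis by (simp add: mult_left_mono mult.commute)
      qed
      have "(\<Sum>a\<in>J. g (a, y) * (pmf p a * pmf q y)) = pmf q y * (\<Sum>a\<in>J. g (a, y) * pmf p a)"
        by (simp add: sum_distrib_left algebra_simps)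
      also have "(\<Sum>a\<in>J. g (a, y) * pmf p a) \<le> (\<Sum>a\<in>J. pmf p a * (F a + Phi n k r H))"
        using step by (intro sum_mono) auto
      also have "\<dots> = (\<Sum>a\<in>J. pmf p a * F a) + (\<Sum>a\<in>J. pmf p a) * Phi n k r H"
        by (simp add: algebra_simps sum.distrib sum_distrib_right)
      also have "(\<Sum>a\<in>J. pmf p a * F a) = (\<Sum>a\<in>J. w a * F a) / S"
        unfolding sum_divide_distrib by (intro sum.cong) (auto simp: pp)
      also have "(\<Sum>a\<in>J. pmf p a) = 1" using sum_pmf_eq_1[OF fin sp] .
      also have "(\<Sum>a\<in>J. w a * F a) \<le> 0"
      proof -
        have Qb: "\<forall>j\<in>{1..k}. 0 < Q j \<and> Q j \<le> 1" unfolding Q_def using Qf_bounds[OF k2 n0] by blast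
        show ?thesis unfolding w_def F_def J_def using key_ineq[OF k2 Qb] yJ J_def by simp
      qed
      then have "(\<Sum>a\<in>J. w a * F a) / S + 1 * Phi n k r H \<le> Phi n k r H"
        using S0 by (simp add: divide_nonpos_pos)
      finally show ?thesis by (simp add: mult_left_mono)
    qed
  qed
  also have "\<dots> = Phi n k r H"
    using sum_pmf_eq_1[OF fin sq] by (simp add: sum_distrib_right[symmetric])
  finally show ?case using e H_def by simp
qed

theorem theorem4p7:
  fixes n k r :: nat
  assumes "2 \<le> k" and "k \<le> n"
  shows "opt_bandit_adap n k r \<le> ereal (real k * log (real k) (real n) + 2 * real k * real r)"
proof -
  have k2: "2 \<le> k" and n0: "0 < n" using assms by auto
  have vl: "valid_learner k (lrn n k)"
    unfolding valid_learner_def labels_def using lrn_facts(2)[OF k2] by blast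
  have r0: "realizable n k r []"
    unfolding realizable_def P_r_def using n0 by auto
  have Phi0: "Phi n k r [] = real k * log (real k) (real n) + 2 * real k * real r"
    unfolding Phi_def Wsum_def errs_def cc_def log_def by simp
  have "opt_bandit_adap n k r \<le> (SUP (AX, AY, T) \<in> {(AX, AY, T). valid_adversary n k r AX AY}.
          ereal (exp_mistakes (lrn n k) AX AY T []))"
    unfolding opt_bandit_adap_def using vl by (intro INF_lower) simp
  also have "\<dots> \<le> ereal (real k * log (real k) (real n) + 2 * real k * real r)"
  proof (intro SUP_least)
    fix z :: "adv_x \<times> adv_y \<times> nat" assume "z \<in> {(AX, AY, T). valid_adversary n k r AX AY}"
    then obtain AX AY and T :: nat where z: "z = (AX, AY, T)" "valid_adversary n k r AX AY" by auto
    have "exp_mistakes (lrn n k) AX AY T [] \<le> Phi n k r (obs_of [])"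
      using main_ind[OF k2 n0 z(2), of "[]" T] r0 by (simp add: obs_of_def)
    then show "(case z of (AX, AY, T) \<Rightarrow> ereal (exp_mistakes (lrn n k) AX AY T [])) \<le>
        ereal (real k * log (real k) (real n) + 2 * real k * real r)"
      using Phi0 z by (simp add: obs_of_def)
  qed
  finally show ?thesis .
qed

end
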